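(* Let $X$ be a finite-dimensional real Banach space and let $A \subset X$ be a bounded set with $d(0, A) > 0$. Let $I$ be an index set with $m$ elements and $\{x_i : i \in I\} \subset S_X$, and assume $\overline{A} \cap \bigcup_{i \in I} x_i^{\perp} = \emptyset$. If $\{B(y_i, r_i)\}_{i \in I}$ covers $A$ for some $y_i \in \mathbb{R}^+ x_i$ and $r_i > 0$ with $\|y_i\| \ge r_i$ for all $i \in I$, then for every selection $\phi$ of the subdifferential mapping $\partial\|\cdot\|$, $\sup_{i \in I} \phi(x_i)(x) > 0$ for every $x \in \overline{A}$.
   Context: $d(0,A)=\inf\{\|a\|:a\in A\}$; $\overline{A}$ is the closure. $x_i^{\perp} = \{ y \in X : \|x_i + \mu y\| \ge \|x_i\| \text{ for all } \mu \in \mathbb{R}\}$ (Birkhoff–James orthogonality). $\mathbb{R}^+ x_i = \{ t x_i : t > 0\}$; $B(c,r) = \{ z : \|c - z\| < r\}$. $\partial\|x\| = \{ x^* \in S_{X^*} : x^*(x) = \|x\|\}$ for $x \neq 0$; a selection of $\partial\|\cdot\|$ is a map $\phi$ with $\phi(x) \in \partial\|x\|$ for each non-zero $x$. *)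

theory Defs
  imports "HOL-Analysis.Analysis"
begin

definition dist0 :: "'a::real_normed_vector set \<Rightarrow> real" where
  "dist0 A = Inf (norm ` A)"

definition bj_orth :: "'a::real_normed_vector \<Rightarrow> 'a set" where
  "bj_orth x = {y. \<forall>\<mu>::real. norm (x + \<mu> *\<^sub>R y) \<ge> norm x}"

text \<open>Subdifferential of the norm at x \<noteq> 0: norm-one continuous linear
  functionals attaining the norm at x.\<close>
definition norm_subdiff :: "'a::real_normed_vector \<Rightarrow> ('a \<Rightarrow> real) set" where
  "norm_subdiff x = {f. bounded_linear f \<and> onorm f = 1 \<and> f x = norm x}"

definition subdiff_selection :: "('a::real_normed_vector \<Rightarrow> ('a \<Rightarrow> real)) \<Rightarrow> bool" where
  "subdiff_selection \<phi> \<longleftrightarrow> (\<forall>x. x \<noteq> 0 \<longrightarrow> \<phi> x \<in> norm_subdiff x)"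

end

theory Submission
  imports Defs
begin

theorem mainTheorem9:
  fixes A :: "'a::banach set" and I :: "'i set" and m :: nat
    and x y :: "'i \<Rightarrow> 'a" and r :: "'i \<Rightarrow> real"
  assumes fin_dim: "\<exists>B. finite B \<and> span B = (UNIV :: 'a set)"
    and bounded: "bounded A"
    and dpos: "dist0 A > 0"
    and card: "finite I" "card I = m"
    and unit: "\<forall>i\<in>I. norm (x i) = 1"
    and disj: "closure A \<inter> (\<Union>i\<in>I. bj_orth (x i)) = {}"
    and ray: "\<forall>i\<in>I. \<exists>t>0. y i = t *\<^sub>R x i"
    and rpos: "\<forall>i\<in>I. r i > 0"
    and big: "\<forall>i\<in>I. norm (y i) \<ge> r i"
    and cover: "A \<subseteq> (\<Union>i\<in>I. ball (y i) (r i))"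
  shows "\<forall>\<phi>. subdiff_selection \<phi> \<longrightarrow>
           (\<forall>z\<in>closure A. (SUP i\<in>I. \<phi> (x i) z) > 0)"
proof (intro allI impI ballI)
  fix \<phi> :: "'a \<Rightarrow> 'a \<Rightarrow> real" and z assume sel: "subdiff_selection \<phi>" and z: "z \<in> closure A"
  have "closure A \<subseteq> (\<Union>i\<in>I. cball (y i) (r i))"
  proof (rule closure_minimal)
    show "A \<subseteq> (\<Union>i\<in>I. cball (y i) (r i))"
      using cover ball_subset_cball by blast
    show "closed (\<Union>i\<in>I. cball (y i) (r i))"
      using card(1) by (intro closed_UN) auto
  qed
  then obtain i where iI: "i \<in> I" and zi: "z \<in> cball (y i) (r i)" using z by blast
  define f where "f = \<phi> (x i)"
  have xi: "norm (x i) = 1" using unit iI by auto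
  hence "x i \<noteq> 0" by auto
  hence fs: "f \<in> norm_subdiff (x i)" using sel unfolding subdiff_selection_def f_def by auto
  hence bl: "bounded_linear f" and on: "onorm f = 1" and fx: "f (x i) = 1"
    using xi unfolding norm_subdiff_def by auto
  have bnd: "\<And>v. f v \<le> norm v"
  proof -
    fix v have "norm (f v) \<le> onorm f * norm v" by (rule onorm[OF bl])
    thus "f v \<le> norm v" using on by auto
  qed
  obtain t where t: "t > 0" "y i = t *\<^sub>R x i" using ray iI by auto
  have fy: "f (y i) = t" using t fx bl by (simp add: linear_simps)
  have ny: "norm (y i) = t" using t xi by simp
  have "f (y i - z) \<le> norm (y i - z)" by (rule bnd)
  also have "\<dots> \<le> r i" using zi by (simp add: dist_norm)
  also have "\<dots> \<le> t" using big iI ny by auto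
  finally have "f (y i) - f z \<le> t" using bl by (simp add: linear_simps)
  hence fz0: "f z \<ge> 0" using fy by simp
  have "f z \<noteq> 0"
  proof
    assume f0: "f z = 0"
    have "z \<in> bj_orth (x i)" unfolding bj_orth_def
    proof (safe)
      fix \<mu> :: real
      have "f (x i + \<mu> *\<^sub>R z) = 1" using f0 fx bl by (simp add: linear_simps)
      thus "norm (x i) \<le> norm (x i + \<mu> *\<^sub>R z)" using bnd[of "x i + \<mu> *\<^sub>R z"] xi by simp
    qed
    thus False using disj z iI by blast
  qed
  hence pos: "f z > 0" using fz0 by simp
  have "f z \<le> (SUP i\<in>I. \<phi> (x i) z)"
    unfolding f_def using iI card(1) by (intro cSUP_upper) auto
  thus "(SUP i\<in>I. \<phi> (x i) z) > 0" using pos by simp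
qed

end
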